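(* For each $p\ge1$ and $N\in\mathbb N$ there exists a constant $K_N\in(1,1+\frac1N)$ such that for every $T>0$ $$\mathbb E\Bigl[\Bigl(\sup_{t\in[0,T]}Y^N(t)\Bigr)^p\Bigr]\le \mu^p\exp\{pK_N^{p-1}T\}.$$ In particular, for every $p\ge 1$ and $T>0$, $\sup_{N}\sup_{t\in[0,T]}\mathbb E[(Y^N(t))^p]<\infty$.
   Context: Model. Fix $\tau>0$, $\mu\ge 0$, $N\in\mathbb N$, and write $L=\lfloor \tau N\rfloor$. The state space is $\Omega_N=[0,\infty)^{L+1}$, with elements $x=(x_{-L},\dots,x_0)$. Define $\theta_N^\pm:\Omega_N\to\Omega_N$ by $(\theta_N^\pm x)_j=x_{j+1}$ for $-L\le j<0$, $(\theta_N^+x)_0=x_0(1+\frac1N)$, $(\theta_N^-x)_0=\max\{x_0(1-\frac{x_{-L}}{N^2}),0\}$. Let $\xi^N=(\xi^N(n))_{n\ge0}$ be the discrete-time Markov chain on $\Omega_N$ moving from $x$ to $\theta_N^+x$ or $\theta_N^-x$ with probability $1/2$ each, with $\xi^N_j(0)=\mu N$ for all $j$. Let $(\sigma_n)_{n\ge1}$ be i.i.d. Exp(1), independent of $\xi^N$, $J_0=0$, $J_n=\sigma_1+\dots+\sigma_n$, and $X^N(t)=\xi^N(n)$ for $t\in[J_n,J_{n+1})$. For $t\ge0$ set $Y^N(t)=X^N_0(Nt)/N$. *)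

theory Defs
  imports "HOL-Probability.Probability"
begin

definition Lof :: "real \<Rightarrow> nat \<Rightarrow> nat" where
  "Lof tau N = nat \<lfloor>tau * real N\<rfloor>"

text \<open>States x = (x_{-L},...,x_0) are represented as functions int => real,
  meaningful on the index range -L..0 (set to 0 outside).\<close>
definition thetaP :: "nat \<Rightarrow> nat \<Rightarrow> (int \<Rightarrow> real) \<Rightarrow> (int \<Rightarrow> real)" where
  "thetaP N L x = (\<lambda>j. if - int L \<le> j \<and> j < 0 then x (j + 1)
                     else if j = 0 then x 0 * (1 + 1 / real N) else 0)"

definition thetaM :: "nat \<Rightarrow> nat \<Rightarrow> (int \<Rightarrow> real) \<Rightarrow> (int \<Rightarrow> real)" where
  "thetaM N L x = (\<lambda>j. if - int L \<le> j \<and> j < 0 then x (j + 1)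
                     else if j = 0 then max (x 0 * (1 - x (- int L) / (real N)^2)) 0 else 0)"

text \<open>Sample points: omega n = (coin flip deciding step n -> n+1, sigma_{n+1}).\<close>
definition model_space :: "(nat \<Rightarrow> bool \<times> real) measure" where
  "model_space = PiM UNIV (\<lambda>_::nat. measure_pmf (bernoulli_pmf (1/2))
                          \<Otimes>\<^sub>M density lborel (exponential_density 1))"

primrec chain :: "real \<Rightarrow> real \<Rightarrow> nat \<Rightarrow> (nat \<Rightarrow> bool \<times> real) \<Rightarrow> nat \<Rightarrow> int \<Rightarrow> real" where
  "chain tau mu N \<omega> 0 = (\<lambda>j. if - int (Lof tau N) \<le> j \<and> j \<le> 0 then mu * real N else 0)"
| "chain tau mu N \<omega> (Suc n) = (if fst (\<omega> n) then thetaP N (Lof tau N) (chain tau mu N \<omega> n)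
                                 else thetaM N (Lof tau N) (chain tau mu N \<omega> n))"

definition jump :: "(nat \<Rightarrow> bool \<times> real) \<Rightarrow> nat \<Rightarrow> real" where
  "jump \<omega> n = (\<Sum>k<n. snd (\<omega> k))"

text \<open>X^N(t) = xi^N(n) for t in [J_n, J_{n+1}).\<close>
definition Xproc :: "real \<Rightarrow> real \<Rightarrow> nat \<Rightarrow> (nat \<Rightarrow> bool \<times> real) \<Rightarrow> real \<Rightarrow> int \<Rightarrow> real" where
  "Xproc tau mu N \<omega> t = chain tau mu N \<omega> (LEAST n. t < jump \<omega> (Suc n))"

definition Yproc :: "real \<Rightarrow> real \<Rightarrow> nat \<Rightarrow> (nat \<Rightarrow> bool \<times> real) \<Rightarrow> real \<Rightarrow> real" where
  "Yproc tau mu N \<omega> t = Xproc tau mu N \<omega> (real N * t) 0 / real N"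

end

theory Submission
  imports Defs
begin

definition U :: "(nat \<Rightarrow> bool \<times> real) \<Rightarrow> nat \<Rightarrow> nat" where
  "U \<omega> n = (\<Sum>i<n. if fst (\<omega> i) then 1 else 0)"

lemma U_Suc: "U \<omega> (Suc n) = U \<omega> n + (if fst (\<omega> n) then 1 else 0)"
  by (simp add: U_def)

lemma chain_nonneg:
  assumes "mu \<ge> 0" shows "chain tau mu N \<omega> n j \<ge> 0"
  using assms
proof (induction n arbitrary: j)
  case 0 then show ?case by simp
next
  case (Suc n)
  then show ?case
    by (auto simp: thetaP_def thetaM_def)
qed

lemma chain_bound:
  assumes "mu \<ge> 0" "N \<ge> 1"
  shows "chain tau mu N \<omega> n 0 \<le> mu * real N * (1 + 1 / real N) ^ U \<omega> n"
proof (induction n)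
  case 0 then show ?case by (simp add: U_def)
next
  case (Suc n)
  define x where "x = chain tau mu N \<omega> n"
  have x0: "x 0 \<ge> 0" and xL: "x (- int (Lof tau N)) \<ge> 0"
    using chain_nonneg[OF assms(1)] by (auto simp: x_def)
  have IH: "x 0 \<le> mu * real N * (1 + 1 / real N) ^ U \<omega> n" using Suc by (simp add: x_def)
  show ?case
  proof (cases "fst (\<omega> n)")
    case True
    have "chain tau mu N \<omega> (Suc n) 0 = x 0 * (1 + 1 / real N)"
      using True by (simp add: x_def thetaP_def)
    also have "\<dots> \<le> mu * real N * (1 + 1 / real N) ^ U \<omega> n * (1 + 1 / real N)"
      using IH by (intro mult_right_mono) auto
    finally show ?thesis using True by (simp add: U_Suc mult.commute mult.left_commute)
  next
    case False
    have "chain tau mu N \<omega> (Suc n) 0 = max (x 0 * (1 - x (- int (Lof tau N)) / (real N)^2)) 0"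
      using False by (simp add: x_def thetaM_def)
    also have "\<dots> \<le> x 0"
    proof -
      have "x 0 * (1 - x (- int (Lof tau N)) / (real N)^2) \<le> x 0 * 1"
        using x0 xL by (intro mult_left_mono) auto
      then show ?thesis using x0 by simp
    qed
    finally show ?thesis using False IH by (simp add: U_Suc)
  qed
qed

definition term_k :: "real \<Rightarrow> real \<Rightarrow> (nat \<Rightarrow> bool \<times> real) \<Rightarrow> nat \<Rightarrow> ennreal" where
  "term_k b s \<omega> k = ennreal (if jump \<omega> (Suc k) \<le> s \<and> fst (\<omega> k) then b ^ U \<omega> k * (b - 1) else 0)"

definition Zf :: "real \<Rightarrow> real \<Rightarrow> (nat \<Rightarrow> bool \<times> real) \<Rightarrow> ennreal" where
  "Zf b s \<omega> = 1 + (\<Sum>k. term_k b s \<omega> k)"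

lemma partial_eq:
  assumes "b \<ge> 1" "\<forall>m<n. jump \<omega> (Suc m) \<le> s"
  shows "ennreal (b ^ U \<omega> n) = 1 + (\<Sum>k<n. term_k b s \<omega> k)"
  using assms(2)
proof (induction n)
  case 0 then show ?case by (simp add: U_def)
next
  case (Suc n)
  have IH: "ennreal (b ^ U \<omega> n) = 1 + (\<Sum>k<n. term_k b s \<omega> k)" using Suc by auto
  have J: "jump \<omega> (Suc n) \<le> s" using Suc.prems by auto
  have "b ^ U \<omega> (Suc n) = b ^ U \<omega> n + (if fst (\<omega> n) then b ^ U \<omega> n * (b - 1) else 0)"
    by (simp add: U_Suc algebra_simps)
  then have "ennreal (b ^ U \<omega> (Suc n)) = ennreal (b ^ U \<omega> n) + term_k b s \<omega> n"
    using J assms(1) by (simp add: term_k_def ennreal_plus[symmetric] del: ennreal_plus)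
  then show ?case using IH by (simp add: add.assoc)
qed

lemma bound_Z:
  assumes "b \<ge> 1" "\<forall>m<n. jump \<omega> (Suc m) \<le> s"
  shows "ennreal (b ^ U \<omega> n) \<le> Zf b s \<omega>"
proof -
  have "(\<Sum>k<n. term_k b s \<omega> k) \<le> (\<Sum>k. term_k b s \<omega> k)"
    by (rule sum_le_suminf) auto
  then show ?thesis unfolding partial_eq[OF assms] Zf_def by (simp add: add_left_mono)
qed

lemma least_prop:
  assumes "0 \<le> t" "t \<le> T" 
  shows "\<forall>m < (LEAST n. real N * t < jump \<omega> (Suc n)). jump \<omega> (Suc m) \<le> real N * T"
proof (intro allI impI)
  fix m assume m: "m < (LEAST n. real N * t < jump \<omega> (Suc n))"
  have "jump \<omega> (Suc m) \<le> real N * t"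
  proof (cases "\<exists>n. real N * t < jump \<omega> (Suc n)")
    case True
    then show ?thesis using not_less_Least[OF m] by simp
  next
    case False then show ?thesis by (meson not_less)
  qed
  also have "\<dots> \<le> real N * T" using assms by (intro mult_left_mono) auto
  finally show "jump \<omega> (Suc m) \<le> real N * T" .
qed

lemma Y_bound:
  assumes "mu \<ge> 0" "N \<ge> 1" "p \<ge> 1" "0 \<le> t" "t \<le> T"
  shows "ennreal (Yproc tau mu N \<omega> t powr p)
     \<le> ennreal (mu powr p) * Zf ((1 + 1 / real N) powr p) (real N * T) \<omega>"
proof -
  define a where "a = 1 + 1 / real N"
  define b where "b = a powr p"
  define n where "n = (LEAST n. real N * t < jump \<omega> (Suc n))"
  have a1: "a \<ge> 1" using assms by (simp add: a_def)
  have b1: "b \<ge> 1" unfolding b_def using a1 assms(3) by (simp add: ge_one_powr_ge_zero)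
  have Y: "Yproc tau mu N \<omega> t = chain tau mu N \<omega> n 0 / real N"
    by (simp add: Yproc_def Xproc_def n_def)
  have Y0: "Yproc tau mu N \<omega> t \<ge> 0" unfolding Y using chain_nonneg[OF assms(1)] by simp
  have "Yproc tau mu N \<omega> t \<le> mu * a ^ U \<omega> n"
    unfolding Y using chain_bound[OF assms(1,2), of tau \<omega> n] assms(2)
    by (simp add: a_def divide_le_eq mult.commute mult.left_commute)
  then have "Yproc tau mu N \<omega> t powr p \<le> (mu * a ^ U \<omega> n) powr p"
    using Y0 assms(3) by (intro powr_mono2) auto
  also have "\<dots> = mu powr p * b ^ U \<omega> n"
    using assms(1) a1 by (simp add: powr_mult b_def powr_realpow[symmetric] powr_powr mult.commute)
  finally have 1: "Yproc tau mu N \<omega> t powr p \<le> mu powr p * b ^ U \<omega> n" .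
  have "ennreal (Yproc tau mu N \<omega> t powr p) \<le> ennreal (mu powr p * b ^ U \<omega> n)"
    using 1 by (rule ennreal_leI)
  also have "\<dots> = ennreal (mu powr p) * ennreal (b ^ U \<omega> n)"
    using b1 by (simp add: ennreal_mult)
  also have "\<dots> \<le> ennreal (mu powr p) * Zf b (real N * T) \<omega>"
    using bound_Z[OF b1 least_prop[OF assms(4,5)]] by (intro mult_left_mono) (auto simp: n_def)
  finally show ?thesis by (simp add: b_def a_def)
qed

abbreviation "BB \<equiv> measure_pmf (bernoulli_pmf (1/2))"
abbreviation "EE \<equiv> density lborel (exponential_density 1)"
definition M0 :: "(bool \<times> real) measure" where "M0 = BB \<Otimes>\<^sub>M EE"

lemma model_space_eq: "model_space = PiM UNIV (\<lambda>_. M0)"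
  by (simp add: model_space_def M0_def)

lemma prob_EE: "prob_space EE" by (rule prob_space_exponential_density) simp

lemma prob_M0: "prob_space M0"
  unfolding M0_def by (intro prob_space_pair prob_space_measure_pmf prob_EE)

interpretation PP: product_prob_space "\<lambda>_::nat. M0" I for I
  by (rule product_prob_spaceI) (rule prob_M0)

lemma space_M0: "space M0 = UNIV"
  by (simp add: M0_def space_pair_measure)

lemma meas_g[measurable]: "(\<lambda>y. g (fst y) :: ennreal) \<in> borel_measurable M0"
proof -
  have "fst \<in> measurable M0 BB" unfolding M0_def by (rule measurable_fst)
  moreover have "g \<in> borel_measurable BB" by simp
  ultimately show ?thesis by (rule measurable_compose)
qed

lemma meas_snd[measurable]: "snd \<in> borel_measurable M0"
  unfolding M0_def by (rule measurable_compose[OF measurable_snd]) simp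

lemma M0_int:
  assumes [measurable]: "h \<in> borel_measurable borel"
  shows "(\<integral>\<^sup>+y. h (snd y) * G (fst y) \<partial>M0) = (\<integral>\<^sup>+b. G b \<partial>BB) * (\<integral>\<^sup>+\<sigma>. h \<sigma> \<partial>EE)"
proof -
  interpret E: prob_space EE by (rule prob_EE)
  have m: "(\<lambda>y. h (snd y) * G (fst y)) \<in> borel_measurable M0" by measurable
  have "(\<integral>\<^sup>+y. h (snd y) * G (fst y) \<partial>M0) = (\<integral>\<^sup>+b. \<integral>\<^sup>+\<sigma>. h \<sigma> * G b \<partial>EE \<partial>BB)"
    unfolding M0_def
    by (subst E.nn_integral_fst[symmetric]) (use m in \<open>auto simp: M0_def split_beta'\<close>)
  also have "\<dots> = (\<integral>\<^sup>+b. G b * (\<integral>\<^sup>+\<sigma>. h \<sigma> \<partial>EE) \<partial>BB)"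
    by (intro nn_integral_cong) (simp add: nn_integral_cmult mult.commute)
  also have "\<dots> = (\<integral>\<^sup>+b. G b \<partial>BB) * (\<integral>\<^sup>+\<sigma>. h \<sigma> \<partial>EE)"
    by (rule nn_integral_multc) simp
  finally show ?thesis .
qed

lemma meas_gi[measurable]:
  "i \<in> I \<Longrightarrow> (\<lambda>x. g (fst (x i)) :: ennreal) \<in> borel_measurable (PiM I (\<lambda>_::nat. M0))"
  by (rule measurable_compose[of "\<lambda>x. x i" _ M0 "\<lambda>y. g (fst y)", OF measurable_component_singleton meas_g])

lemma meas_si[measurable]:
  "i \<in> I \<Longrightarrow> (\<lambda>x. snd (x i)) \<in> borel_measurable (PiM I (\<lambda>_::nat. M0))"
  by (rule measurable_compose[of "\<lambda>x. x i" _ M0 snd, OF measurable_component_singleton meas_snd])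

definition psi :: "(real \<Rightarrow> ennreal) \<Rightarrow> real \<Rightarrow> ennreal" where
  "psi \<phi> r = (\<integral>\<^sup>+\<sigma>. \<phi> (\<sigma> + r) \<partial>EE)"

lemma psi_meas[measurable]:
  assumes [measurable]: "\<phi> \<in> borel_measurable borel"
  shows "psi \<phi> \<in> borel_measurable borel"
proof -
  interpret E: prob_space EE by (rule prob_EE)
  show ?thesis unfolding psi_def
    by (rule E.borel_measurable_nn_integral) measurable
qed

lemma prod_step:
  fixes I :: "nat set"
  assumes "finite I" "j \<notin> I" and [measurable]: "\<phi> \<in> borel_measurable borel"
  shows "(\<integral>\<^sup>+x. \<phi> (\<Sum>i\<in>insert j I. snd (x i)) * (\<Prod>i\<in>insert j I. g i (fst (x i))) \<partial>PiM (insert j I) (\<lambda>_. M0))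
       = (\<integral>\<^sup>+b. g j b \<partial>BB) * (\<integral>\<^sup>+x. psi \<phi> (\<Sum>i\<in>I. snd (x i)) * (\<Prod>i\<in>I. g i (fst (x i))) \<partial>PiM I (\<lambda>_. M0))"
proof -
  have "(\<integral>\<^sup>+x. \<phi> (\<Sum>i\<in>insert j I. snd (x i)) * (\<Prod>i\<in>insert j I. g i (fst (x i))) \<partial>PiM (insert j I) (\<lambda>_. M0))
     = (\<integral>\<^sup>+x. (\<integral>\<^sup>+y. \<phi> (\<Sum>i\<in>insert j I. snd ((x(j:=y)) i)) * (\<Prod>i\<in>insert j I. g i (fst ((x(j:=y)) i))) \<partial>M0) \<partial>PiM I (\<lambda>_. M0))"
    by (rule PP.product_nn_integral_insert[where f="\<lambda>x. \<phi> (\<Sum>i\<in>insert j I. snd (x i)) * (\<Prod>i\<in>insert j I. g i (fst (x i)))"]) (use assms in auto)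
  also have "\<dots> = (\<integral>\<^sup>+x. (\<integral>\<^sup>+y. \<phi> (snd y + (\<Sum>i\<in>I. snd (x i))) * g j (fst y) \<partial>M0) * (\<Prod>i\<in>I. g i (fst (x i))) \<partial>PiM I (\<lambda>_. M0))"
  proof (rule nn_integral_cong)
    fix x
    have "(\<integral>\<^sup>+y. \<phi> (\<Sum>i\<in>insert j I. snd ((x(j:=y)) i)) * (\<Prod>i\<in>insert j I. g i (fst ((x(j:=y)) i))) \<partial>M0)
       = (\<integral>\<^sup>+y. \<phi> (snd y + (\<Sum>i\<in>I. snd (x i))) * g j (fst y) * (\<Prod>i\<in>I. g i (fst (x i))) \<partial>M0)"
    proof (rule nn_integral_cong)
      fix y
      have s: "(\<Sum>i\<in>I. snd ((x(j:=y)) i)) = (\<Sum>i\<in>I. snd (x i))"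
        using assms(2) by (intro sum.cong) auto
      have p: "(\<Prod>i\<in>I. g i (fst ((x(j:=y)) i))) = (\<Prod>i\<in>I. g i (fst (x i)))"
        using assms(2) by (intro prod.cong) auto
      show "\<phi> (\<Sum>i\<in>insert j I. snd ((x(j:=y)) i)) * (\<Prod>i\<in>insert j I. g i (fst ((x(j:=y)) i)))
         = \<phi> (snd y + (\<Sum>i\<in>I. snd (x i))) * g j (fst y) * (\<Prod>i\<in>I. g i (fst (x i)))"
        using assms(1,2) s p by (simp add: mult.assoc)
    qed
    also have "\<dots> = (\<integral>\<^sup>+y. \<phi> (snd y + (\<Sum>i\<in>I. snd (x i))) * g j (fst y) \<partial>M0) * (\<Prod>i\<in>I. g i (fst (x i)))"
      by (rule nn_integral_multc) measurable
    finally show "(\<integral>\<^sup>+y. \<phi> (\<Sum>i\<in>insert j I. snd ((x(j:=y)) i)) * (\<Prod>i\<in>insert j I. g i (fst ((x(j:=y)) i))) \<partial>M0)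
       = (\<integral>\<^sup>+y. \<phi> (snd y + (\<Sum>i\<in>I. snd (x i))) * g j (fst y) \<partial>M0) * (\<Prod>i\<in>I. g i (fst (x i)))" .
  qed
  also have "\<dots> = (\<integral>\<^sup>+x. (\<integral>\<^sup>+b. g j b \<partial>BB) * (psi \<phi> (\<Sum>i\<in>I. snd (x i)) * (\<Prod>i\<in>I. g i (fst (x i)))) \<partial>PiM I (\<lambda>_. M0))"
  proof (intro nn_integral_cong)
    fix x :: "nat \<Rightarrow> bool \<times> real"
    have "(\<integral>\<^sup>+y. \<phi> (snd y + (\<Sum>i\<in>I. snd (x i))) * g j (fst y) \<partial>M0)
      = (\<integral>\<^sup>+b. g j b \<partial>BB) * (\<integral>\<^sup>+\<sigma>. \<phi> (\<sigma> + (\<Sum>i\<in>I. snd (x i))) \<partial>EE)"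
      by (rule M0_int[where h="\<lambda>\<sigma>. \<phi> (\<sigma> + (\<Sum>i\<in>I. snd (x i)))"]) measurable
    then show "(\<integral>\<^sup>+y. \<phi> (snd y + (\<Sum>i\<in>I. snd (x i))) * g j (fst y) \<partial>M0) * (\<Prod>i\<in>I. g i (fst (x i)))
      = (\<integral>\<^sup>+b. g j b \<partial>BB) * (psi \<phi> (\<Sum>i\<in>I. snd (x i)) * (\<Prod>i\<in>I. g i (fst (x i))))"
      by (simp only: psi_def mult.assoc)
  qed
  also have "\<dots> = (\<integral>\<^sup>+b. g j b \<partial>BB) * (\<integral>\<^sup>+x. psi \<phi> (\<Sum>i\<in>I. snd (x i)) * (\<Prod>i\<in>I. g i (fst (x i))) \<partial>PiM I (\<lambda>_. M0))"
    by (rule nn_integral_cmult) measurable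
  finally show ?thesis .
qed

lemma prodlem:
  fixes I :: "nat set"
  assumes "finite I" 
  shows "\<phi> \<in> borel_measurable borel \<Longrightarrow>
    (\<integral>\<^sup>+x. \<phi> (\<Sum>i\<in>I. snd (x i)) * (\<Prod>i\<in>I. g i (fst (x i))) \<partial>PiM I (\<lambda>_. M0))
       = (\<Prod>i\<in>I. \<integral>\<^sup>+b. g i b \<partial>BB) * (\<integral>\<^sup>+x. \<phi> (\<Sum>i\<in>I. snd (x i)) \<partial>PiM I (\<lambda>_. M0))"
  using assms
proof (induction I arbitrary: \<phi> rule: finite_induct)
  case empty
  then show ?case by (simp add: PiM_empty)
next
  case (insert j I)
  note [measurable] = insert.prems
  have one: "(\<integral>\<^sup>+x. \<phi> (\<Sum>i\<in>insert j I. snd (x i)) \<partial>PiM (insert j I) (\<lambda>_. M0))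
     = (\<integral>\<^sup>+x. psi \<phi> (\<Sum>i\<in>I. snd (x i)) \<partial>PiM I (\<lambda>_. M0))"
    using prod_step[OF insert.hyps(1,2) insert.prems, of "\<lambda>_ _. 1"] by simp
  show ?case
    unfolding prod_step[OF insert.hyps(1,2) insert.prems] one
    using insert.IH[of "psi \<phi>"] insert.hyps by (simp add: mult.assoc)
qed

lemma distr_snd_M0: "distr M0 lborel snd = EE"
proof (rule measure_eqI)
  show "sets (distr M0 lborel snd) = sets EE" by simp
next
  fix A assume A: "A \<in> sets (distr M0 lborel snd)"
  interpret E: prob_space EE by (rule prob_EE)
  have A': "A \<in> sets EE" using A by simp
  have "snd -` A \<inter> space M0 = space BB \<times> A" by (auto simp: space_M0)
  then have "emeasure (distr M0 lborel snd) A = emeasure M0 (space BB \<times> A)"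
    using A by (subst emeasure_distr) auto
  also have "\<dots> = emeasure BB (space BB) * emeasure EE A"
    unfolding M0_def using A' by (intro E.emeasure_pair_measure_Times) auto
  also have "\<dots> = emeasure EE A"
    by (simp add: measure_pmf.emeasure_space_1)
  finally show "emeasure (distr M0 lborel snd) A = emeasure EE A" .
qed

lemma erl:
  assumes "s \<ge> 0"
  shows "(\<integral>\<^sup>+x. indicator {..s} (\<Sum>i\<in>{..k}. snd (x i)) \<partial>PiM {..k} (\<lambda>_::nat. M0)) = ennreal (erlang_CDF k 1 s)"
proof -
  let ?P = "PiM {..k} (\<lambda>_::nat. M0)"
  have ps: "prob_space ?P" by (rule prob_space_PiM) (rule prob_M0)
  have dist: "distributed ?P lborel (\<lambda>x. snd (x i)) (exponential_density 1)" if i: "i \<in> {..k}" for i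
  proof -
    have "distr ?P lborel (\<lambda>x. snd (x i)) = distr (distr ?P M0 (\<lambda>x. x i)) lborel snd"
      using i by (subst distr_distr) (auto simp: comp_def)
    also have "\<dots> = EE" using i by (simp add: PP.PiM_component distr_snd_M0)
    finally show ?thesis unfolding distributed_def using i by auto
  qed
  have ind0: "prob_space.indep_vars ?P (\<lambda>_. M0) (\<lambda>i x. x i) {..k}"
  proof (subst prob_space.indep_vars_iff_distr_eq_PiM'[OF ps])
    show "distr ?P (PiM {..k} (\<lambda>_. M0)) (\<lambda>x. \<lambda>i\<in>{..k}. x i) = PiM {..k} (\<lambda>i. distr ?P M0 (\<lambda>x. x i))"
    proof -
      have "distr ?P (PiM {..k} (\<lambda>_. M0)) (\<lambda>x. \<lambda>i\<in>{..k}. x i) = ?P"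
        using PP.distr_PiM_restrict_finite[of "{..k}" "{..k}"] by simp
      also have "\<dots> = PiM {..k} (\<lambda>i. distr ?P M0 (\<lambda>x. x i))"
        by (intro PiM_cong refl) (simp add: PP.PiM_component)
      finally show ?thesis .
    qed
  qed auto
  have ind: "prob_space.indep_vars ?P (\<lambda>_. borel) (\<lambda>i x. snd (x i)) {..k}"
    using prob_space.indep_vars_compose2[OF ps ind0, of "\<lambda>_. snd" "\<lambda>_. borel"] by simp
  have D: "distributed ?P lborel (\<lambda>x. \<Sum>i\<in>{..k}. snd (x i)) (erlang_density k 1)"
    using prob_space.exponential_distributed_sum[OF ps, of "{..k}" 1 "\<lambda>i x. snd (x i)", OF _ _ _ dist ind] by simp
  have "(\<integral>\<^sup>+x. indicator {..s} (\<Sum>i\<in>{..k}. snd (x i)) \<partial>?P)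
      = (\<integral>\<^sup>+x. indicator {x\<in>space ?P. (\<Sum>i\<in>{..k}. snd (x i)) \<le> s} x \<partial>?P)"
    by (intro nn_integral_cong) (auto simp: indicator_def)
  also have "\<dots> = emeasure ?P {x\<in>space ?P. (\<Sum>i\<in>{..k}. snd (x i)) \<le> s}"
    by (rule nn_integral_indicator) measurable
  also have "\<dots> = ennreal (measure ?P {x\<in>space ?P. (\<Sum>i\<in>{..k}. snd (x i)) \<le> s})"
    using ps by (simp add: prob_space_def finite_measure.emeasure_eq_measure)
  also have "\<dots> = ennreal (erlang_CDF k 1 s)"
    using prob_space.erlang_distributed_le[OF ps D _ assms] by simp
  finally show ?thesis .
qed

lemma erl_eq: "s \<ge> 0 \<Longrightarrow> erlang_CDF k 1 s = 1 - (\<Sum>n\<le>k. s^n * exp (- s) / fact n)"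
  by (simp add: erlang_CDF_def)

lemma scaleR_fact_eq: "(\<lambda>n. (x::real) ^ n /\<^sub>R fact n) = (\<lambda>n. x ^ n / fact n)"
  by (simp add: divide_inverse_commute)

lemma R_sums:
  fixes c s :: real
  shows "(\<lambda>m. c^m * (s^m * exp (- s) / fact m)) sums exp ((c - 1) * s)"
proof -
  have e: "(\<lambda>n. (c * s)^n / fact n) sums exp (c * s)"
  proof -
    show ?thesis using exp_converges[of "c * s"] scaleR_fact_eq[of "c * s"] by metis
  qed
  have "(\<lambda>n. exp (- s) * ((c * s)^n / fact n)) sums (exp (- s) * exp (c * s))"
    by (rule sums_mult) (rule e)
  moreover have "exp (- s) * exp (c * s) = exp ((c - 1) * s)"
    by (simp add: exp_add[symmetric] algebra_simps)
  ultimately show ?thesis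
    by (simp add: power_mult_distrib divide_inverse mult_ac)
qed

lemma partial_identity:
  fixes c s :: real
  defines "q \<equiv> \<lambda>m. s^m * exp (- s) / fact m"
  shows "(\<Sum>k<K. (c - 1) * c^k * (1 - (\<Sum>n\<le>k. q n)))
     = (\<Sum>m\<le>K. c^m * q m) - 1 + c^K * (1 - (\<Sum>n\<le>K. q n))"
proof (induction K)
  case 0 then show ?case by (simp add: q_def)
next
  case (Suc K)
  have "(\<Sum>k<Suc K. (c - 1) * c^k * (1 - (\<Sum>n\<le>k. q n)))
     = (\<Sum>k<K. (c - 1) * c^k * (1 - (\<Sum>n\<le>k. q n))) + (c - 1) * c^K * (1 - (\<Sum>n\<le>K. q n))"
    by (rule sum.lessThan_Suc)
  also have "\<dots> = (\<Sum>m\<le>K. c^m * q m) - 1 + c^K * (1 - (\<Sum>n\<le>K. q n)) + (c - 1) * c^K * (1 - (\<Sum>n\<le>K. q n))"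
    by (simp only: Suc.IH)
  also have "\<dots> = ((\<Sum>m\<le>K. c^m * q m) + c^Suc K * q (Suc K)) - 1 + c^Suc K * (1 - ((\<Sum>n\<le>K. q n) + q (Suc K)))"
    by (simp add: algebra_simps)
  also have "\<dots> = (\<Sum>m\<le>Suc K. c^m * q m) - 1 + c^Suc K * (1 - (\<Sum>n\<le>Suc K. q n))"
    by (simp only: sum.atMost_Suc)
  finally show ?case .
qed

lemma series_bound:
  fixes c s :: real
  assumes c: "c \<ge> 1" and s: "s \<ge> 0"
  shows "(\<Sum>k<K. (c - 1) * c^k * erlang_CDF k 1 s) \<le> exp ((c - 1) * s) - 1"
proof -
  define q where "q = (\<lambda>m. s^m * exp (- s) / fact m)"
  have q0: "q m \<ge> 0" for m using s by (simp add: q_def)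
  have "(\<Sum>k<K. (c - 1) * c^k * erlang_CDF k 1 s) = (\<Sum>k<K. (c - 1) * c^k * (1 - (\<Sum>n\<le>k. q n)))"
    using s by (simp add: erl_eq q_def)
  also have "\<dots> = (\<Sum>m\<le>K. c^m * q m) - 1 + c^K * (1 - (\<Sum>n\<le>K. q n))"
    unfolding q_def by (rule partial_identity)
  also have "\<dots> \<le> exp ((c - 1) * s) - 1"
  proof -
    have qs: "q sums 1" using R_sums[of 1 s] by (simp add: q_def)
    have Rs: "(\<lambda>m. c^m * q m) sums exp ((c - 1) * s)" using R_sums[of c s] by (simp add: q_def)
    have t1: "(\<lambda>i. q (i + Suc K)) sums (1 - (\<Sum>n\<le>K. q n))"
      using qs sums_iff_shift[of q "Suc K" "1 - (\<Sum>n\<le>K. q n)"] by (simp add: lessThan_Suc_atMost)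
    have t2: "(\<lambda>i. c^(i + Suc K) * q (i + Suc K)) sums (exp ((c - 1) * s) - (\<Sum>n\<le>K. c^n * q n))"
      using Rs sums_iff_shift[of "\<lambda>m. c^m * q m" "Suc K"] by (simp add: lessThan_Suc_atMost)
    have t3: "(\<lambda>i. c^K * q (i + Suc K)) sums (c^K * (1 - (\<Sum>n\<le>K. q n)))"
      by (rule sums_mult[OF t1])
    have "c^K * (1 - (\<Sum>n\<le>K. q n)) \<le> exp ((c - 1) * s) - (\<Sum>n\<le>K. c^n * q n)"
    proof (rule sums_le[OF _ t3 t2])
      fix i
      show "c^K * q (i + Suc K) \<le> c^(i + Suc K) * q (i + Suc K)"
        using c q0 by (intro mult_right_mono power_increasing) auto
    qed
    then show ?thesis by simp
  qed
  finally show ?thesis .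
qed

definition gk :: "real \<Rightarrow> nat \<Rightarrow> nat \<Rightarrow> bool \<Rightarrow> ennreal" where
  "gk b k i h = ennreal (if i < k then (if h then b else 1) else (if h then 1 else 0))"

definition Fk :: "real \<Rightarrow> real \<Rightarrow> nat \<Rightarrow> (nat \<Rightarrow> bool \<times> real) \<Rightarrow> ennreal" where
  "Fk b s k x = indicator {..s} (\<Sum>i\<in>{..k}. snd (x i)) * (\<Prod>i\<in>{..k}. gk b k i (fst (x i)))"

lemma prod_U:
  assumes "b \<ge> 0" "k \<le> k'"
  shows "(\<Prod>i<k. gk b k' i (fst (\<omega> i))) = ennreal (b ^ U \<omega> k)"
  using assms(2)
proof (induction k)
  case 0 then show ?case by (simp add: U_def)
next
  case (Suc k)
  then have IH: "(\<Prod>i<k. gk b k' i (fst (\<omega> i))) = ennreal (b ^ U \<omega> k)" by simp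
  have "gk b k' k (fst (\<omega> k)) = ennreal (if fst (\<omega> k) then b else 1)"
    using Suc.prems by (simp add: gk_def)
  then show ?case
    using IH assms by (simp add: U_Suc power_add ennreal_mult[symmetric])
qed

lemma term_eq:
  assumes "b \<ge> 1"
  shows "term_k b s \<omega> k = ennreal (b - 1) * Fk b s k \<omega>"
proof -
  have J: "jump \<omega> (Suc k) = (\<Sum>i\<in>{..k}. snd (\<omega> i))"
    by (simp add: jump_def lessThan_Suc_atMost)
  have P: "(\<Prod>i\<in>{..k}. gk b k i (fst (\<omega> i))) = ennreal (b ^ U \<omega> k) * (if fst (\<omega> k) then 1 else 0)"
    unfolding lessThan_Suc_atMost[symmetric] prod.lessThan_Suc
    using prod_U[of b k k \<omega>] assms by (simp add: gk_def)
  show ?thesis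
    unfolding term_k_def Fk_def P J[symmetric] using assms
    by (auto simp: indicator_def ennreal_mult[symmetric] mult.commute)
qed

lemma Fk_restrict: "Fk b s k (restrict \<omega> {..k}) = Fk b s k \<omega>"
proof -
  have 1: "(\<Sum>i\<in>{..k}. snd (restrict \<omega> {..k} i)) = (\<Sum>i\<in>{..k}. snd (\<omega> i))"
    by (rule sum.cong) auto
  have 2: "(\<Prod>i\<in>{..k}. gk b k i (fst (restrict \<omega> {..k} i))) = (\<Prod>i\<in>{..k}. gk b k i (fst (\<omega> i)))"
    by (rule prod.cong) auto
  show ?thesis unfolding Fk_def 1 2 ..
qed

lemma Fk_meas[measurable]: "Fk b s k \<in> borel_measurable (PiM {..k} (\<lambda>_. M0))"
  unfolding Fk_def by measurable

lemma ennreal_half_aux: "x \<ge> 0 \<Longrightarrow> ennreal x * inverse 2 + inverse 2 = ennreal ((1 + x) / 2)"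
  by (smt (verit, del_insts) add_divide_distrib_ennreal add_numeral_left
    arithmetic_simps(1,78) divide_ennreal_def ennreal_1
    ennreal_divide_numeral ennreal_plus one_eq_numeral_iff)

lemma int_gk: "b \<ge> 0 \<Longrightarrow> (\<integral>\<^sup>+h. gk b k i h \<partial>BB) = ennreal (if i < k then (1 + b) / 2 else 1 / 2)"
  by (simp add: gk_def ennreal_half_aux)

lemma int_term:
  assumes b: "b \<ge> 1" and s: "s \<ge> 0"
  shows "(\<integral>\<^sup>+\<omega>. term_k b s \<omega> k \<partial>model_space)
     = ennreal ((b - 1) / 2 * ((1 + b) / 2) ^ k * erlang_CDF k 1 s)"
proof -
  have "(\<integral>\<^sup>+\<omega>. term_k b s \<omega> k \<partial>model_space)
      = (\<integral>\<^sup>+\<omega>. ennreal (b - 1) * Fk b s k (restrict \<omega> {..k}) \<partial>PiM UNIV (\<lambda>_. M0))"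
    unfolding model_space_eq using b by (simp add: term_eq Fk_restrict)
  also have "\<dots> = ennreal (b - 1) * (\<integral>\<^sup>+\<omega>. Fk b s k (restrict \<omega> {..k}) \<partial>PiM UNIV (\<lambda>_. M0))"
  proof (rule nn_integral_cmult)
    have r: "(\<lambda>\<omega>. restrict \<omega> {..k}) \<in> measurable (PiM UNIV (\<lambda>_. M0)) (PiM {..k} (\<lambda>_::nat. M0))"
      by (rule measurable_restrict_subset) simp
    show "(\<lambda>\<omega>. Fk b s k (restrict \<omega> {..k})) \<in> borel_measurable (PiM UNIV (\<lambda>_. M0))"
      by (rule measurable_compose[OF r Fk_meas])
  qed
  also have "(\<integral>\<^sup>+\<omega>. Fk b s k (restrict \<omega> {..k}) \<partial>PiM UNIV (\<lambda>_. M0))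
      = (\<integral>\<^sup>+x. Fk b s k x \<partial>distr (PiM UNIV (\<lambda>_. M0)) (PiM {..k} (\<lambda>_. M0)) (\<lambda>\<omega>. restrict \<omega> {..k}))"
  proof -
    have r: "(\<lambda>\<omega>. restrict \<omega> {..k}) \<in> measurable (PiM UNIV (\<lambda>_. M0)) (PiM {..k} (\<lambda>_::nat. M0))"
      by (rule measurable_restrict_subset) simp
    show ?thesis using Fk_meas by (simp add: nn_integral_distr[OF r])
  qed
  also have "\<dots> = (\<integral>\<^sup>+x. Fk b s k x \<partial>PiM {..k} (\<lambda>_. M0))"
    by (simp add: PP.distr_PiM_restrict_finite)
  also have "\<dots> = (\<Prod>i\<in>{..k}. \<integral>\<^sup>+h. gk b k i h \<partial>BB) * (\<integral>\<^sup>+x. indicator {..s} (\<Sum>i\<in>{..k}. snd (x i)) \<partial>PiM {..k} (\<lambda>_::nat. M0))"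
    unfolding Fk_def by (rule prodlem) auto
  also have "\<dots> = ennreal (((1 + b) / 2) ^ k * (1 / 2)) * ennreal (erlang_CDF k 1 s)"
  proof -
    have b0: "b \<ge> 0" using b by simp
    have "(\<Prod>i\<in>{..k}. \<integral>\<^sup>+h. gk b k i h \<partial>BB) = (\<Prod>i\<in>{..k}. ennreal (if i < k then (1 + b) / 2 else 1 / 2))"
      by (rule prod.cong) (simp_all only: int_gk[OF b0])
    also have "\<dots> = ennreal (\<Prod>i\<in>{..k}. (if i < k then (1 + b) / 2 else 1 / 2))"
      using b0 by (intro prod_ennreal) auto
    also have "(\<Prod>i\<in>{..k}. (if i < k then (1 + b) / 2 else 1 / 2)) = (\<Prod>i<k. (1 + b) / 2) * (1 / 2 :: real)"
      unfolding lessThan_Suc_atMost[symmetric] prod.lessThan_Suc by simp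
    also have "\<dots> = ((1 + b) / 2) ^ k * (1 / 2)" by simp
    finally show ?thesis unfolding erl[OF s] by simp
  qed
  finally show ?thesis using b s
    by (simp add: ennreal_mult[symmetric] erlang_CDF_nonneg mult_ac)
qed

lemma ps_model: "prob_space model_space"
  unfolding model_space_eq by (rule prob_space_PiM) (rule prob_M0)

lemma term_meas[measurable]:
  assumes "b \<ge> 1"
  shows "(\<lambda>\<omega>. term_k b s \<omega> k) \<in> borel_measurable model_space"
proof -
  have r: "(\<lambda>\<omega>. restrict \<omega> {..k}) \<in> measurable (PiM UNIV (\<lambda>_. M0)) (PiM {..k} (\<lambda>_::nat. M0))"
    by (rule measurable_restrict_subset) simp
  have "(\<lambda>\<omega>. ennreal (b - 1) * Fk b s k (restrict \<omega> {..k})) \<in> borel_measurable (PiM UNIV (\<lambda>_. M0))"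
    by (intro borel_measurable_times_ennreal measurable_const measurable_compose[OF r Fk_meas]) simp
  moreover have "(\<lambda>\<omega>. term_k b s \<omega> k) = (\<lambda>\<omega>. ennreal (b - 1) * Fk b s k (restrict \<omega> {..k}))"
    by (rule ext) (simp only: term_eq[OF assms] Fk_restrict)
  ultimately show ?thesis unfolding model_space_eq by simp
qed

lemma int_Z:
  assumes b: "b \<ge> 1" and s: "s \<ge> 0"
  shows "(\<integral>\<^sup>+\<omega>. Zf b s \<omega> \<partial>model_space) \<le> ennreal (exp (((1 + b) / 2 - 1) * s))"
proof -
  define c where "c = (1 + b) / 2"
  have c1: "c \<ge> 1" using b by (simp add: c_def)
  interpret P: prob_space model_space by (rule ps_model)
  have "(\<integral>\<^sup>+\<omega>. Zf b s \<omega> \<partial>model_space) = (\<integral>\<^sup>+\<omega>. 1 \<partial>model_space) + (\<integral>\<^sup>+\<omega>. (\<Sum>k. term_k b s \<omega> k) \<partial>model_space)"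
    unfolding Zf_def using b by (intro nn_integral_add) auto
  also have "(\<integral>\<^sup>+\<omega>. (\<Sum>k. term_k b s \<omega> k) \<partial>model_space) = (\<Sum>k. \<integral>\<^sup>+\<omega>. term_k b s \<omega> k \<partial>model_space)"
    using b by (intro nn_integral_suminf) auto
  also have "\<dots> = (\<Sum>k. ennreal ((c - 1) * c ^ k * erlang_CDF k 1 s))"
    using b s by (simp add: int_term c_def field_simps)
  also have "\<dots> \<le> ennreal (exp ((c - 1) * s) - 1)"
  proof (rule suminf_le_const)
    show "summable (\<lambda>k. ennreal ((c - 1) * c ^ k * erlang_CDF k 1 s))" by simp
    fix n
    have "(\<Sum>k<n. ennreal ((c - 1) * c ^ k * erlang_CDF k 1 s)) = ennreal (\<Sum>k<n. (c - 1) * c ^ k * erlang_CDF k 1 s)"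
      using c1 by (intro sum_ennreal) (auto intro!: mult_nonneg_nonneg erlang_CDF_nonneg)
    also have "\<dots> \<le> ennreal (exp ((c - 1) * s) - 1)"
      by (rule ennreal_leI) (rule series_bound[OF c1 s])
    finally show "(\<Sum>k<n. ennreal ((c - 1) * c ^ k * erlang_CDF k 1 s)) \<le> ennreal (exp ((c - 1) * s) - 1)" .
  qed
  finally have "(\<integral>\<^sup>+\<omega>. Zf b s \<omega> \<partial>model_space) \<le> 1 + ennreal (exp ((c - 1) * s) - 1)"
    by (simp add: P.emeasure_space_1)
  also have "\<dots> = ennreal (exp ((c - 1) * s))"
  proof -
    have e: "exp ((c - 1) * s) \<ge> 1" using c1 s by simp
    then show ?thesis by (smt (verit, best) ennreal_1 ennreal_plus)
  qed
  finally show ?thesis by (simp add: c_def)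
qed

lemma part1:
  fixes tau mu p :: real and N :: nat
  assumes mu: "mu \<ge> 0" and p: "p \<ge> 1" and N: "N \<ge> 1"
  shows "\<exists>K::real. 1 < K \<and> K < 1 + 1 / real N \<and>
              (\<forall>T::real. T > 0 \<longrightarrow>
                 (\<integral>\<^sup>+ \<omega>. (SUP t\<in>{0..T}. ennreal (Yproc tau mu N \<omega> t powr p)) \<partial>model_space)
                   \<le> ennreal (mu powr p * exp (p * K powr (p - 1) * T)))"
proof -
  define a where "a = 1 + 1 / real N"
  define b where "b = a powr p"
  have a1: "a > 1" using N by (simp add: a_def)
  have b1: "b \<ge> 1" unfolding b_def using a1 p by (simp add: ge_one_powr_ge_zero)
  obtain K where K: "1 < K" "K < a" and Keq: "a powr p - 1 powr p = (a - 1) * (p * K powr (p - 1))"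
    using MVT2[OF a1, of "\<lambda>x. x powr p" "\<lambda>x. p * x powr (p - 1)"] has_real_derivative_powr
    by auto
  have beq: "b - 1 = p * K powr (p - 1) / real N"
    using Keq N by (simp add: b_def a_def)
  show ?thesis
  proof (intro exI conjI allI impI)
    show "1 < K" by fact
    show "K < 1 + 1 / real N" using K by (simp add: a_def)
    fix T :: real assume T: "T > 0"
    define s where "s = real N * T"
    have s0: "s \<ge> 0" using T by (simp add: s_def)
    note [measurable] = term_meas[OF b1]
    have Zm: "Zf b s \<in> borel_measurable model_space"
      unfolding Zf_def by measurable
    have "(\<integral>\<^sup>+ \<omega>. (SUP t\<in>{0..T}. ennreal (Yproc tau mu N \<omega> t powr p)) \<partial>model_space)
        \<le> (\<integral>\<^sup>+ \<omega>. ennreal (mu powr p) * Zf b s \<omega> \<partial>model_space)"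
    proof (rule nn_integral_mono)
      fix \<omega>
      show "(SUP t\<in>{0..T}. ennreal (Yproc tau mu N \<omega> t powr p)) \<le> ennreal (mu powr p) * Zf b s \<omega>"
        using Y_bound[OF mu N p] by (auto intro!: SUP_least simp: b_def a_def s_def)
    qed
    also have "\<dots> = ennreal (mu powr p) * (\<integral>\<^sup>+ \<omega>. Zf b s \<omega> \<partial>model_space)"
      by (rule nn_integral_cmult) (rule Zm)
    also have "\<dots> \<le> ennreal (mu powr p) * ennreal (exp (((1 + b) / 2 - 1) * s))"
      by (rule mult_left_mono[OF int_Z[OF b1 s0]]) simp
    also have "\<dots> = ennreal (mu powr p * exp (((1 + b) / 2 - 1) * s))"
      by (simp add: ennreal_mult)
    also have "\<dots> \<le> ennreal (mu powr p * exp (p * K powr (p - 1) * T))"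
    proof (rule ennreal_leI, rule mult_left_mono)
      have "((1 + b) / 2 - 1) * s = (b - 1) / 2 * s" by (simp add: field_simps)
      also have "\<dots> = p * K powr (p - 1) * T / 2"
        using N by (simp add: beq s_def)
      also have "\<dots> \<le> p * K powr (p - 1) * T"
        using p T by simp
      finally show "exp (((1 + b) / 2 - 1) * s) \<le> exp (p * K powr (p - 1) * T)" by simp
    qed simp
    finally show "(\<integral>\<^sup>+ \<omega>. (SUP t\<in>{0..T}. ennreal (Yproc tau mu N \<omega> t powr p)) \<partial>model_space)
                   \<le> ennreal (mu powr p * exp (p * K powr (p - 1) * T))" .
  qed
qed

theorem lemma3p1:
  fixes tau mu :: real
  assumes "tau > 0" and "mu \<ge> 0"
  shows "(\<forall>p::real. p \<ge> 1 \<longrightarrow> (\<forall>N::nat. N \<ge> 1 \<longrightarrow>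
            (\<exists>K::real. 1 < K \<and> K < 1 + 1 / real N \<and>
              (\<forall>T::real. T > 0 \<longrightarrow>
                 (\<integral>\<^sup>+ \<omega>. (SUP t\<in>{0..T}. ennreal (Yproc tau mu N \<omega> t powr p)) \<partial>model_space)
                   \<le> ennreal (mu powr p * exp (p * K powr (p - 1) * T))))))
       \<and> (\<forall>p::real. p \<ge> 1 \<longrightarrow> (\<forall>T::real. T > 0 \<longrightarrow>
            (\<exists>C::real. \<forall>N::nat. N \<ge> 1 \<longrightarrow> (\<forall>t\<in>{0..T}.
               (\<integral>\<^sup>+ \<omega>. ennreal (Yproc tau mu N \<omega> t powr p) \<partial>model_space) \<le> ennreal C))))"
proof (intro conjI allI impI)
  fix p :: real and N :: nat
  assume "p \<ge> 1" "N \<ge> 1"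
  then show "\<exists>K::real. 1 < K \<and> K < 1 + 1 / real N \<and>
              (\<forall>T::real. T > 0 \<longrightarrow>
                 (\<integral>\<^sup>+ \<omega>. (SUP t\<in>{0..T}. ennreal (Yproc tau mu N \<omega> t powr p)) \<partial>model_space)
                   \<le> ennreal (mu powr p * exp (p * K powr (p - 1) * T)))"
    using part1[OF assms(2)] by blast
next
  fix p T :: real
  assume p: "p \<ge> 1" and T: "T > 0"
  show "\<exists>C::real. \<forall>N::nat. N \<ge> 1 \<longrightarrow> (\<forall>t\<in>{0..T}.
               (\<integral>\<^sup>+ \<omega>. ennreal (Yproc tau mu N \<omega> t powr p) \<partial>model_space) \<le> ennreal C)"
  proof (intro exI allI impI ballI)
    fix N :: nat and t assume N: "N \<ge> 1" and t: "t \<in> {0..T}"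
    obtain K where K: "1 < K" "K < 1 + 1 / real N"
      and B: "\<And>T. T > 0 \<Longrightarrow> (\<integral>\<^sup>+ \<omega>. (SUP t\<in>{0..T}. ennreal (Yproc tau mu N \<omega> t powr p)) \<partial>model_space)
                   \<le> ennreal (mu powr p * exp (p * K powr (p - 1) * T))"
      using part1[OF assms(2) p N, of tau] by blast
    have "(\<integral>\<^sup>+ \<omega>. ennreal (Yproc tau mu N \<omega> t powr p) \<partial>model_space)
        \<le> (\<integral>\<^sup>+ \<omega>. (SUP t\<in>{0..T}. ennreal (Yproc tau mu N \<omega> t powr p)) \<partial>model_space)"
      by (rule nn_integral_mono) (rule SUP_upper[OF t])
    also have "\<dots> \<le> ennreal (mu powr p * exp (p * K powr (p - 1) * T))" by (rule B[OF T])
    also have "\<dots> \<le> ennreal (mu powr p * exp (p * 2 powr (p - 1) * T))"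
    proof (rule ennreal_leI, rule mult_left_mono)
      have "1 / real N \<le> 1" using N by simp
      then have K2: "K \<le> 2" using K by simp
      have "K powr (p - 1) \<le> 2 powr (p - 1)"
        using K2 K p by (intro powr_mono2) auto
      then have "p * K powr (p - 1) * T \<le> p * 2 powr (p - 1) * T"
        using p T by (intro mult_right_mono mult_left_mono) auto
      then show "exp (p * K powr (p - 1) * T) \<le> exp (p * 2 powr (p - 1) * T)" by simp
    qed simp
    finally show "(\<integral>\<^sup>+ \<omega>. ennreal (Yproc tau mu N \<omega> t powr p) \<partial>model_space)
        \<le> ennreal (mu powr p * exp (p * 2 powr (p - 1) * T))" .
  qed
qed

end
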